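(* Let $B_J=L+U\in\mathbb R^{n\times n}$ with $L$ strictly lower triangular, $U$ strictly upper triangular, and let $c\in\mathbb R^n$. Let $y^{(0)}\in\mathbb R^n$ and $y^{(k+1)}=(I-U)^{-1}(Ly^{(k)}+c)$ for $k\ge0$ (backward Gauss–Seidel). Consider the FUTC scheme: given $x^{(0)}_1,\dots,x^{(0)}_{n-1}\in\mathbb R^n$ arbitrary and $x^{(0)}_n=y^{(0)}$, for $k\ge0$ and $i=1,\dots,n$, $$x^{(k+1)}_i=\sum_{m=1}^{i-1}U^{(n+1-m)}_c x^{(k+1)}_m+\sum_{m=i}^{n-1}U^{(n+1-m)}_c x^{(k)}_m+Lx^{(k)}_n+c.$$ Then $x^{(k)}_n=y^{(k)}$ for all $k\ge0$, independently of $x^{(0)}_1,\dots,x^{(0)}_{n-1}$.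
   Context: For $j\in\{2,\dots,n\}$, $U^{(j)}_c$ is the $n\times n$ matrix whose $j$-th column agrees with the $j$-th column of $U$ in rows $i\le j-1$ and which is zero elsewhere (the $j$-th column of $U$). Empty sums are zero. *)

theory Defs
  imports "Jordan_Normal_Form.Gauss_Jordan_Elimination"
begin

text \<open>Matrices are 0-indexed in Jordan_Normal_Form.  For the paper's (1-based)
column index j in 2..n, U_c^(j) is the n x n matrix whose j-th column agrees
with the j-th column of U in rows 1..j-1 and is zero elsewhere.\<close>

definition Uc :: "nat \<Rightarrow> real mat \<Rightarrow> nat \<Rightarrow> real mat" where
  "Uc n U j = mat n n (\<lambda>(r, s). if s = j - 1 \<and> r < j - 1 then U $$ (r, s) else 0)"

definition strictly_lower :: "nat \<Rightarrow> real mat \<Rightarrow> bool" where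
  "strictly_lower n L \<longleftrightarrow> (\<forall>r<n. \<forall>s<n. r \<le> s \<longrightarrow> L $$ (r, s) = 0)"

definition strictly_upper :: "nat \<Rightarrow> real mat \<Rightarrow> bool" where
  "strictly_upper n U \<longleftrightarrow> (\<forall>r<n. \<forall>s<n. s \<le> r \<longrightarrow> U $$ (r, s) = 0)"

end

theory Submission
  imports Defs "Jordan_Normal_Form.Determinant"
begin

lemma Uc_mult:
  assumes v: "v \<in> carrier_vec n" and r: "r < n" and m: "1 \<le> m" "m < n"
  shows "(Uc n U (n + 1 - m) *\<^sub>v v) $ r = (if r < n - m then U $$ (r, n - m) * v $ (n - m) else 0)"
proof -
  have "(Uc n U (n + 1 - m) *\<^sub>v v) $ r =
     (\<Sum>s\<in>{0..<n}. (if s = n - m \<and> r < n - m then U $$ (r, s) else 0) * v $ s)"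
    using v r unfolding Uc_def mult_mat_vec_def scalar_prod_def by (auto intro!: sum.cong)
  also have "\<dots> = (\<Sum>s\<in>{0..<n}. if s = n - m then (if r < n - m then U $$ (r, n - m) * v $ (n - m) else 0) else 0)"
    by (rule sum.cong) auto
  also have "\<dots> = (if r < n - m then U $$ (r, n - m) * v $ (n - m) else 0)"
    using m by (subst sum.delta) auto
  finally show ?thesis .
qed

theorem theorem6p2:
  fixes n :: nat and L U :: "real mat" and c :: "real vec"
    and y :: "nat \<Rightarrow> real vec" and x :: "nat \<Rightarrow> nat \<Rightarrow> real vec"
  assumes n: "n \<ge> 1"
    and L: "L \<in> carrier_mat n n" "strictly_lower n L"
    and U: "U \<in> carrier_mat n n" "strictly_upper n U"
    and c: "c \<in> carrier_vec n"
    and y0: "y 0 \<in> carrier_vec n"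
    and ystep: "\<And>k. y (Suc k) = the (mat_inverse (1\<^sub>m n - U)) *\<^sub>v (L *\<^sub>v y k + c)"
    and x0: "\<And>i. 1 \<le> i \<Longrightarrow> i \<le> n - 1 \<Longrightarrow> x 0 i \<in> carrier_vec n"
    and x0n: "x 0 n = y 0"
    and xstep: "\<And>k i. 1 \<le> i \<Longrightarrow> i \<le> n \<Longrightarrow>
       x (Suc k) i =
         finsum_vec TYPE(real) n (\<lambda>m. Uc n U (n + 1 - m) *\<^sub>v x (Suc k) m) {1..<i}
       + finsum_vec TYPE(real) n (\<lambda>m. Uc n U (n + 1 - m) *\<^sub>v x k m) {i..<n}
       + L *\<^sub>v x k n + c"
  shows "\<forall>k. x k n = y k"
proof -
  have xc: "x k m \<in> carrier_vec n" if "1 \<le> m" "m \<le> n" for k m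
  proof (cases k)
    case 0
    show ?thesis
    proof (cases "m = n")
      case True then show ?thesis unfolding 0 using x0n y0 by simp
    next
      case False then have "m \<le> n - 1" using that by linarith
      then show ?thesis unfolding 0 using x0[OF that(1)] by blast
    qed
  next
    case (Suc k')
    show ?thesis unfolding Suc
      apply (subst xstep[OF that])
      apply (rule carrier_vecI)
      using c by simp
  qed
  have gen: "x (Suc k) i $ r =
     (\<Sum>m\<in>{1..<i}. if r < n - m then U $$ (r, n - m) * x (Suc k) m $ (n - m) else 0)
   + (\<Sum>m\<in>{i..<n}. if r < n - m then U $$ (r, n - m) * x k m $ (n - m) else 0)
   + (L *\<^sub>v x k n + c) $ r" if i: "1 \<le> i" "i \<le> n" and r: "r < n" for k i r
  proof -
    have c1: "(\<lambda>m. Uc n U (n + 1 - m) *\<^sub>v x (Suc k) m) \<in> {1..<i} \<rightarrow> carrier_vec n"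
      unfolding Uc_def by (intro funcsetI carrier_vecI) simp
    have c2: "(\<lambda>m. Uc n U (n + 1 - m) *\<^sub>v x k m) \<in> {i..<n} \<rightarrow> carrier_vec n"
      unfolding Uc_def by (intro funcsetI carrier_vecI) simp
    have lc: "L *\<^sub>v x k n \<in> carrier_vec n" using L(1) by (intro carrier_vecI) auto
    have e1: "finsum_vec TYPE(real) n (\<lambda>m. Uc n U (n + 1 - m) *\<^sub>v x (Suc k) m) {1..<i} $ r
       = (\<Sum>m\<in>{1..<i}. if r < n - m then U $$ (r, n - m) * x (Suc k) m $ (n - m) else 0)"
      apply (subst index_finsum_vec[OF _ r c1], simp)
      apply (rule sum.cong[OF refl])
      apply (rule Uc_mult[OF _ r])
      using i xc by auto
    have e2: "finsum_vec TYPE(real) n (\<lambda>m. Uc n U (n + 1 - m) *\<^sub>v x k m) {i..<n} $ r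
       = (\<Sum>m\<in>{i..<n}. if r < n - m then U $$ (r, n - m) * x k m $ (n - m) else 0)"
      apply (subst index_finsum_vec[OF _ r c2], simp)
      apply (rule sum.cong[OF refl])
      apply (rule Uc_mult[OF _ r])
      using i xc by auto
    have f1: "finsum_vec TYPE(real) n (\<lambda>m. Uc n U (n + 1 - m) *\<^sub>v x (Suc k) m) {1..<i} \<in> carrier_vec n"
      by (rule finsum_vec_closed[OF c1])
    have f2: "finsum_vec TYPE(real) n (\<lambda>m. Uc n U (n + 1 - m) *\<^sub>v x k m) {i..<n} \<in> carrier_vec n"
      by (rule finsum_vec_closed[OF c2])
    have lcc: "L *\<^sub>v x k n + c \<in> carrier_vec n" using lc c by (rule add_carrier_vec)
    show ?thesis
      apply (subst xstep[OF i])
      using e1 e2 f1 f2 lcc lc c r by simp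
  qed
  have stab: "x (Suc k) i $ r =
     (\<Sum>m\<in>{1..<n-r}. if r < n - m then U $$ (r, n - m) * x (Suc k) m $ (n - m) else 0)
     + (L *\<^sub>v x k n + c) $ r" if i: "1 \<le> i" "i \<le> n" "n - r \<le> i" and r: "r < n" for k i r
  proof -
    have s2: "(\<Sum>m\<in>{i..<n}. if r < n - m then U $$ (r, n - m) * x k m $ (n - m) else 0) = 0"
      using i by (intro sum.neutral) auto
    have "{1..<i} = {1..<n-r} \<union> {n-r..<i}" using i r by auto
    then have s1: "(\<Sum>m\<in>{1..<i}. if r < n - m then U $$ (r, n - m) * x (Suc k) m $ (n - m) else 0)
       = (\<Sum>m\<in>{1..<n-r}. if r < n - m then U $$ (r, n - m) * x (Suc k) m $ (n - m) else 0)
       + (\<Sum>m\<in>{n-r..<i}. if r < n - m then U $$ (r, n - m) * x (Suc k) m $ (n - m) else 0)"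
      by (simp add: sum.union_disjoint ivl_disj_int)
    have s3: "(\<Sum>m\<in>{n-r..<i}. if r < n - m then U $$ (r, n - m) * x (Suc k) m $ (n - m) else 0) = 0"
      by (intro sum.neutral) auto
    show ?thesis using gen[OF i(1,2) r] s1 s2 s3 by simp
  qed
  have inv: "the (mat_inverse (1\<^sub>m n - U)) * (1\<^sub>m n - U) = 1\<^sub>m n
        \<and> the (mat_inverse (1\<^sub>m n - U)) \<in> carrier_mat n n"
  proof -
    have A: "1\<^sub>m n - U \<in> carrier_mat n n" using U by auto
    have ut: "upper_triangular (1\<^sub>m n - U)"
      using U unfolding upper_triangular_def strictly_upper_def by auto
    have "det (1\<^sub>m n - U) = prod_list (diag_mat (1\<^sub>m n - U))"
      by (rule det_upper_triangular[OF ut A])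
    also have "diag_mat (1\<^sub>m n - U) = map (\<lambda>_. 1) [0..<n]"
      using U unfolding diag_mat_def strictly_upper_def by auto
    also have "prod_list (map (\<lambda>_. 1::real) [0..<n]) = 1" by (induct n) auto
    finally have "det (1\<^sub>m n - U) \<noteq> 0" by simp
    from det_non_zero_imp_unit[OF A this] have un: "1\<^sub>m n - U \<in> Units (ring_mat TYPE(real) n undefined)" .
    obtain B where "mat_inverse (1\<^sub>m n - U) = Some B"
      using mat_inverse(1)[OF A, of undefined] un by (cases "mat_inverse (1\<^sub>m n - U)") auto
    with mat_inverse(2)[OF A this] show ?thesis by auto
  qed
  show ?thesis
  proof
    fix k show "x k n = y k"
    proof (induct k)
      case 0 then show ?case using x0n .
    next
      case (Suc k)
      define z where "z = x (Suc k) n"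
      define w where "w = x k n"
      have zc: "z \<in> carrier_vec n" unfolding z_def using xc n by auto
      have wc: "w \<in> carrier_vec n" unfolding w_def using xc n by auto
      have eq: "z = U *\<^sub>v z + (L *\<^sub>v w + c)"
      proof (rule eq_vecI)
        show "dim_vec z = dim_vec (U *\<^sub>v z + (L *\<^sub>v w + c))" using zc c by simp
        fix r assume "r < dim_vec (U *\<^sub>v z + (L *\<^sub>v w + c))"
        then have r: "r < n" using c by simp
        have "z $ r = (\<Sum>m\<in>{1..<n-r}. if r < n - m then U $$ (r, n - m) * x (Suc k) m $ (n - m) else 0)
           + (L *\<^sub>v w + c) $ r"
          unfolding z_def w_def using stab[OF n le_refl _ r] by simp
        also have "(\<Sum>m\<in>{1..<n-r}. if r < n - m then U $$ (r, n - m) * x (Suc k) m $ (n - m) else 0)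
           = (\<Sum>m\<in>{1..<n-r}. U $$ (r, n - m) * z $ (n - m))"
        proof (rule sum.cong[OF refl])
          fix m assume m: "m \<in> {1..<n-r}"
          from m r have c1: "1 \<le> m" "m \<le> n" "n - (n - m) \<le> m" "n - m < n" by auto
          from m r have c2: "1 \<le> n" "n \<le> n" "n - (n - m) \<le> n" "n - m < n" by auto
          have "x (Suc k) m $ (n - m) = z $ (n - m)"
            unfolding z_def by (rule trans[OF stab[OF c1] stab[OF c2, symmetric]])
          then show "(if r < n - m then U $$ (r, n - m) * x (Suc k) m $ (n - m) else 0)
             = U $$ (r, n - m) * z $ (n - m)" using m by auto
        qed
        also have "\<dots> = (\<Sum>s\<in>{r<..<n}. U $$ (r, s) * z $ s)"
          by (rule sum.reindex_bij_witness[of _ "\<lambda>s. n - s" "\<lambda>m. n - m"]) auto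
        also have "\<dots> = (U *\<^sub>v z) $ r"
        proof -
          have "(U *\<^sub>v z) $ r = (\<Sum>s\<in>{0..<n}. U $$ (r, s) * z $ s)"
            using U zc r unfolding mult_mat_vec_def scalar_prod_def by (auto intro!: sum.cong)
          also have "\<dots> = (\<Sum>s\<in>{r<..<n}. U $$ (r, s) * z $ s)"
            using U(2) r unfolding strictly_upper_def
            by (intro sum.mono_neutral_right) auto
          finally show ?thesis by simp
        qed
        finally show "z $ r = (U *\<^sub>v z + (L *\<^sub>v w + c)) $ r"
          using r U L c zc wc by simp
      qed
      have "(1\<^sub>m n - U) *\<^sub>v z = L *\<^sub>v w + c"
      proof -
        have "(1\<^sub>m n - U) *\<^sub>v z = z - U *\<^sub>v z"
          using minus_mult_distrib_mat_vec[OF one_carrier_mat U(1) zc] zc by simp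
        also have "\<dots> = L *\<^sub>v w + c"
        proof -
          have uz: "U *\<^sub>v z \<in> carrier_vec n" using U(1) zc by simp
          have lw: "L *\<^sub>v w + c \<in> carrier_vec n" using L(1) wc c by simp
          have cw: "z $ r = (U *\<^sub>v z) $ r + (L *\<^sub>v w + c) $ r" if "r < n" for r
          proof -
            have "z $ r = (U *\<^sub>v z + (L *\<^sub>v w + c)) $ r" using eq by simp
            also have "\<dots> = (U *\<^sub>v z) $ r + (L *\<^sub>v w + c) $ r"
              using lw c that by (intro index_add_vec) auto
            finally show ?thesis .
          qed
          show ?thesis
          proof (rule eq_vecI)
            fix r assume "r < dim_vec (L *\<^sub>v w + c)"
            then have r: "r < n" using c by auto
            have "(z - U *\<^sub>v z) $ r = z $ r - (U *\<^sub>v z) $ r"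
              using U(1) r by (intro index_minus_vec) auto
            then show "(z - U *\<^sub>v z) $ r = (L *\<^sub>v w + c) $ r" using cw[OF r] by simp
          next
            show "dim_vec (z - U *\<^sub>v z) = dim_vec (L *\<^sub>v w + c)" using U(1) c by simp
          qed
        qed
        finally show ?thesis .
      qed
      then have "y (Suc k) = the (mat_inverse (1\<^sub>m n - U)) *\<^sub>v ((1\<^sub>m n - U) *\<^sub>v z)"
        using ystep Suc w_def by simp
      also have "\<dots> = (the (mat_inverse (1\<^sub>m n - U)) * (1\<^sub>m n - U)) *\<^sub>v z"
        using inv U zc by (subst assoc_mult_mat_vec) auto
      also have "\<dots> = z" using inv zc by simp
      finally show ?case unfolding z_def by simp
    qed
  qed
qed

end
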